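(* Let $(X,d)$ be a u.l.f. metric space and $h\colon X\to\mathbb{R}$ a coarse map. Then the action $\sigma_h$ of $\mathbb{R}$ on $\mathrm{C}^*_u(X)$ given by $\sigma_{h,t}(a)=e^{it\bar h}ae^{-it\bar h}$ is strongly continuous, i.e., $t\mapsto\sigma_{h,t}(a)\in\mathrm{C}^*_u(X)$ is norm continuous for all $a\in\mathrm{C}^*_u(X)$.
   Context: A metric space is u.l.f. if for every $r>0$ the cardinalities of its balls of radius $r$ are uniformly bounded. $\mathrm{C}^*_u(X)$ is the norm closure of the $^*$-algebra of operators $a$ on $\ell_2(X)$ with $\sup\{d(x,y):\langle a\delta_y,\delta_x\rangle\neq0\}<\infty$. $h$ is coarse if for each $r>0$ there is $s>0$ with $d(x,y)<r\Rightarrow|h(x)-h(y)|<s$. $e^{it\bar h}$ is the diagonal unitary $\delta_x\mapsto e^{ith(x)}\delta_x$. *)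

theory Defs
  imports "HOL-Analysis.Analysis"
begin

text \<open>Operators on \<ell>2(X) are represented as maps on all functions; only their behaviour on
  \<ell>2(X) matters.\<close>

definition in_ell2 :: "('a \<Rightarrow> complex) \<Rightarrow> bool" where
  "in_ell2 f \<longleftrightarrow> (\<lambda>x. (cmod (f x))\<^sup>2) summable_on UNIV"

definition ell2_norm :: "('a \<Rightarrow> complex) \<Rightarrow> real" where
  "ell2_norm f = sqrt (\<Sum>\<^sub>\<infinity>x. (cmod (f x))\<^sup>2)"

definition delta :: "'a \<Rightarrow> 'a \<Rightarrow> complex" where
  "delta y = (\<lambda>z. if z = y then 1 else 0)"

definition bounded_op :: "(('a \<Rightarrow> complex) \<Rightarrow> ('a \<Rightarrow> complex)) \<Rightarrow> bool" where
  "bounded_op a \<longleftrightarrow>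
     (\<forall>f. in_ell2 f \<longrightarrow> in_ell2 (a f)) \<and>
     (\<forall>f g c. in_ell2 f \<longrightarrow> in_ell2 g \<longrightarrow>
        a (\<lambda>x. f x + c * g x) = (\<lambda>x. a f x + c * a g x)) \<and>
     (\<exists>C. \<forall>f. in_ell2 f \<longrightarrow> ell2_norm (a f) \<le> C * ell2_norm f)"

definition op_norm :: "(('a \<Rightarrow> complex) \<Rightarrow> ('a \<Rightarrow> complex)) \<Rightarrow> real" where
  "op_norm a = (SUP f\<in>{f. in_ell2 f \<and> ell2_norm f \<le> 1}. ell2_norm (a f))"

definition op_diff ::
  "(('a \<Rightarrow> complex) \<Rightarrow> ('a \<Rightarrow> complex)) \<Rightarrow> (('a \<Rightarrow> complex) \<Rightarrow> ('a \<Rightarrow> complex))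
    \<Rightarrow> (('a \<Rightarrow> complex) \<Rightarrow> ('a \<Rightarrow> complex))" where
  "op_diff a b = (\<lambda>f x. a f x - b f x)"

text \<open>Finite propagation: sup of d(x,y) over nonzero matrix entries
  \<langle>a \<delta>_y, \<delta>_x\<rangle> = (a (delta y)) x is finite.\<close>
definition finite_propagation :: "(('a::metric_space \<Rightarrow> complex) \<Rightarrow> ('a \<Rightarrow> complex)) \<Rightarrow> bool" where
  "finite_propagation a \<longleftrightarrow> (\<exists>R. \<forall>x y. a (delta y) x \<noteq> 0 \<longrightarrow> dist x y \<le> R)"

definition uniform_roe :: "(('a::metric_space \<Rightarrow> complex) \<Rightarrow> ('a \<Rightarrow> complex)) set" where
  "uniform_roe = {a. bounded_op a \<and>
     (\<forall>\<epsilon>>0. \<exists>b. bounded_op b \<and> finite_propagation b \<and> op_norm (op_diff a b) < \<epsilon>)}"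

definition ulf :: "'a::metric_space itself \<Rightarrow> bool" where
  "ulf _ \<longleftrightarrow> (\<forall>r>0. \<exists>N::nat. \<forall>x::'a. finite (ball x r) \<and> card (ball x r) \<le> N)"

definition coarse_fun :: "('a::metric_space \<Rightarrow> real) \<Rightarrow> bool" where
  "coarse_fun h \<longleftrightarrow> (\<forall>r>0. \<exists>s>0. \<forall>x y. dist x y < r \<longrightarrow> \<bar>h x - h y\<bar> < s)"

definition exp_diag :: "('a \<Rightarrow> real) \<Rightarrow> real \<Rightarrow> ('a \<Rightarrow> complex) \<Rightarrow> ('a \<Rightarrow> complex)" where
  "exp_diag h t = (\<lambda>f x. exp (\<i> * complex_of_real (t * h x)) * f x)"

definition sigma :: "('a \<Rightarrow> real) \<Rightarrow> real \<Rightarrow> (('a \<Rightarrow> complex) \<Rightarrow> ('a \<Rightarrow> complex))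
    \<Rightarrow> (('a \<Rightarrow> complex) \<Rightarrow> ('a \<Rightarrow> complex))" where
  "sigma h t a = exp_diag h t \<circ> a \<circ> exp_diag h (- t)"

end

theory Submission
  imports Defs
begin


lemma ell2_norm_nonneg: "ell2_norm f \<ge> 0"
  unfolding ell2_norm_def by (simp add: infsum_nonneg)

lemma sum_le_ell2: assumes "in_ell2 g" "finite G"
  shows "(\<Sum>x\<in>G. (cmod (g x))\<^sup>2) \<le> (ell2_norm g)\<^sup>2"
proof -
  have "(\<Sum>x\<in>G. (cmod (g x))\<^sup>2) \<le> (\<Sum>\<^sub>\<infinity>x. (cmod (g x))\<^sup>2)"
    using assms by (intro finite_sum_le_infsum) (auto simp: in_ell2_def)
  also have "\<dots> = (ell2_norm g)\<^sup>2" unfolding ell2_norm_def by (simp add: infsum_nonneg)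
  finally show ?thesis .
qed

lemma pt_le_ell2: assumes "in_ell2 g" shows "cmod (g x) \<le> ell2_norm g"
proof -
  have "(cmod (g x))\<^sup>2 \<le> (ell2_norm g)\<^sup>2" using sum_le_ell2[OF assms, of "{x}"] by simp
  thus ?thesis using ell2_norm_nonneg[of g] by (rule power2_le_imp_le)
qed

lemma ell2_by_finite: assumes "K \<ge> 0" "\<And>G. finite G \<Longrightarrow> (\<Sum>x\<in>G. (cmod (g x))\<^sup>2) \<le> K\<^sup>2"
  shows "in_ell2 g \<and> ell2_norm g \<le> K"
proof -
  have s: "in_ell2 g" unfolding in_ell2_def
  proof (rule nonneg_bdd_above_summable_on)
    show "bdd_above (sum (\<lambda>x. (cmod (g x))\<^sup>2) ` {F. F \<subseteq> UNIV \<and> finite F})"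
      using assms(2) by (intro bdd_aboveI[of _ "K\<^sup>2"]) blast
  qed simp
  have "(\<Sum>\<^sub>\<infinity>x. (cmod (g x))\<^sup>2) \<le> K\<^sup>2"
    using s assms by (intro infsum_le_finite_sums) (auto simp: in_ell2_def)
  hence "ell2_norm g \<le> sqrt (K\<^sup>2)" unfolding ell2_norm_def by (rule real_sqrt_le_mono)
  with assms show ?thesis using s by simp
qed

lemma L2_le_ell2: assumes "in_ell2 g" "finite G"
  shows "L2_set (\<lambda>x. cmod (g x)) G \<le> ell2_norm g"
  using sum_le_ell2[OF assms] ell2_norm_nonneg[of g] unfolding L2_set_def
  by (simp add: real_sqrt_le_iff' real_le_lsqrt sum_nonneg)

lemma ell2_tri: assumes "in_ell2 u" "in_ell2 v" "\<And>x. cmod (w x) \<le> cmod (u x) + cmod (v x)"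
  shows "in_ell2 w \<and> ell2_norm w \<le> ell2_norm u + ell2_norm v"
proof (rule ell2_by_finite)
  show "0 \<le> ell2_norm u + ell2_norm v" by (simp add: ell2_norm_nonneg add_nonneg_nonneg)
  fix G :: "'a set" assume G: "finite G"
  have "L2_set (\<lambda>x. cmod (w x)) G \<le> L2_set (\<lambda>x. cmod (u x) + cmod (v x)) G"
    by (rule L2_set_mono) (use assms in auto)
  also have "\<dots> \<le> L2_set (\<lambda>x. cmod (u x)) G + L2_set (\<lambda>x. cmod (v x)) G"
    by (rule L2_set_triangle_ineq)
  also have "\<dots> \<le> ell2_norm u + ell2_norm v"
    using L2_le_ell2[OF assms(1) G] L2_le_ell2[OF assms(2) G] by simp
  finally have "L2_set (\<lambda>x. cmod (w x)) G \<le> ell2_norm u + ell2_norm v" .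
  thus "(\<Sum>x\<in>G. (cmod (w x))\<^sup>2) \<le> (ell2_norm u + ell2_norm v)\<^sup>2"
    unfolding L2_set_def by (metis L2_set_def L2_set_nonneg real_le_lsqrt real_sqrt_le_iff sqrt_le_D)
qed

lemma ell2_eq_norm: assumes "in_ell2 u" "\<And>x. cmod (w x) = cmod (u x)"
  shows "in_ell2 w \<and> ell2_norm w = ell2_norm u"
  using assms unfolding in_ell2_def ell2_norm_def by simp

lemma exp_diag_ell2: assumes "in_ell2 f"
  shows "in_ell2 (exp_diag h t f) \<and> ell2_norm (exp_diag h t f) = ell2_norm f"
  by (rule ell2_eq_norm[OF assms]) (simp add: exp_diag_def norm_mult)

lemma fin_supp_ell2: assumes "finite S" "\<And>x. x \<notin> S \<Longrightarrow> f x = 0" shows "in_ell2 f"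
proof -
  have "in_ell2 f \<and> ell2_norm f \<le> sqrt (\<Sum>x\<in>S. (cmod (f x))\<^sup>2)"
  proof (rule ell2_by_finite)
    fix G :: "'a set" assume G: "finite G"
    have "(\<Sum>x\<in>G. (cmod (f x))\<^sup>2) = (\<Sum>x\<in>G\<inter>S. (cmod (f x))\<^sup>2)"
      using G assms by (intro sum.mono_neutral_right) auto
    also have "\<dots> \<le> (\<Sum>x\<in>S. (cmod (f x))\<^sup>2)" using assms by (intro sum_mono2) auto
    finally show "(\<Sum>x\<in>G. (cmod (f x))\<^sup>2) \<le> (sqrt (\<Sum>x\<in>S. (cmod (f x))\<^sup>2))\<^sup>2"
      by (simp add: sum_nonneg)
  qed (simp add: sum_nonneg)
  thus ?thesis by simp
qed

lemma delta_norm: "in_ell2 (delta y) \<and> ell2_norm (delta y) \<le> 1"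
proof (rule ell2_by_finite)
  fix G :: "'a set" assume G: "finite G"
  have "(\<Sum>x\<in>G. (cmod (delta y x))\<^sup>2) = (\<Sum>x\<in>G. if x = y then 1 else 0)"
    by (intro sum.cong) (auto simp: delta_def)
  also have "\<dots> \<le> 1" using G by (simp add: sum.delta)
  finally show "(\<Sum>x\<in>G. (cmod (delta y x))\<^sup>2) \<le> 1\<^sup>2" by simp
qed simp


lemma cexp1_le: "cmod (exp (\<i> * complex_of_real t) - 1) \<le> \<bar>t\<bar>"
proof -
  have e: "exp (\<i> * complex_of_real t) = Complex (cos t) (sin t)"
    by (simp add: exp_eq_polar cis.code)
  have "(cmod (exp (\<i> * complex_of_real t) - 1))\<^sup>2 = (cos t - 1)\<^sup>2 + (sin t)\<^sup>2"
    unfolding e by (simp add: cmod_def)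
  also have "\<dots> = 2 - 2 * cos t" by (simp add: power2_eq_square algebra_simps sin_squared_eq)
  also have "cos t = 1 - 2 * (sin (t/2))\<^sup>2" using cos_double_sin[of "t/2"] by simp
  hence "2 - 2 * cos t = 4 * (sin (t/2))\<^sup>2" by simp
  also have "\<dots> \<le> 4 * (t/2)\<^sup>2"
    using power_mono[OF abs_sin_x_le_abs_x[of "t/2"] abs_ge_zero, of 2] by (simp add: power_divide)
  also have "\<dots> = t\<^sup>2" by (simp add: power2_eq_square)
  finally show ?thesis by (simp add: abs_le_square_iff[symmetric])
qed

lemma cexp_diff_le: "cmod (exp (\<i> * complex_of_real a) - exp (\<i> * complex_of_real b)) \<le> \<bar>a - b\<bar>"
proof -
  have "exp (\<i> * complex_of_real a) - exp (\<i> * complex_of_real b)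
     = exp (\<i> * complex_of_real b) * (exp (\<i> * complex_of_real (a - b)) - 1)"
    by (simp add: algebra_simps flip: exp_add)
  thus ?thesis using cexp1_le[of "a-b"] by (simp add: norm_mult)
qed



lemma bop_lin: "bounded_op b \<Longrightarrow> in_ell2 f \<Longrightarrow> in_ell2 g \<Longrightarrow>
   b (\<lambda>x. f x + c * g x) = (\<lambda>x. b f x + c * b g x)"
  unfolding bounded_op_def by blast

lemma bop_ell2: "bounded_op b \<Longrightarrow> in_ell2 f \<Longrightarrow> in_ell2 (b f)"
  unfolding bounded_op_def by blast

lemma zero_ell2: "in_ell2 (\<lambda>x. 0)" unfolding in_ell2_def by simp

lemma bop_zero: assumes "bounded_op b" shows "b (\<lambda>x. 0) = (\<lambda>x. 0)"
proof -
  have "b (\<lambda>x. 0 + 1 * 0) = (\<lambda>x. b (\<lambda>x. 0) x + 1 * b (\<lambda>x. 0) x)"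
    by (rule bop_lin[OF assms zero_ell2 zero_ell2])
  hence "\<And>x. b (\<lambda>x. 0) x = b (\<lambda>x. 0) x + b (\<lambda>x. 0) x" by (metis add_0 mult_1 mult_zero_right)
  thus ?thesis by auto
qed

lemma bop_scale: assumes "bounded_op b" "in_ell2 g" shows "b (\<lambda>x. c * g x) = (\<lambda>x. c * b g x)"
  using bop_lin[OF assms(1) zero_ell2 assms(2), of c] bop_zero[OF assms(1)] by simp

lemma bop_bound: assumes "bounded_op b"
  obtains C where "C \<ge> 0" "\<And>f. in_ell2 f \<Longrightarrow> ell2_norm (b f) \<le> C * ell2_norm f"
proof -
  obtain C where C: "\<And>f. in_ell2 f \<Longrightarrow> ell2_norm (b f) \<le> C * ell2_norm f"
    using assms unfolding bounded_op_def by blast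
  have "\<And>f. in_ell2 f \<Longrightarrow> ell2_norm (b f) \<le> max C 0 * ell2_norm f"
    using C by (meson ell2_norm_nonneg max.cobounded1 mult_right_mono order_trans)
  thus ?thesis using that[of "max C 0"] by simp
qed

lemma opnorm_le: assumes "\<And>f. in_ell2 f \<Longrightarrow> ell2_norm f \<le> 1 \<Longrightarrow> ell2_norm (A f) \<le> K"
  shows "op_norm A \<le> K"
  unfolding op_norm_def
proof (rule cSUP_least)
  show "{f. in_ell2 f \<and> ell2_norm f \<le> 1} \<noteq> {}"
    using zero_ell2 by (auto intro!: exI[of _ "\<lambda>x. 0"] simp: ell2_norm_def)
qed (use assms in auto)

lemma opnorm_ge: assumes "\<And>f. in_ell2 f \<Longrightarrow> ell2_norm (A f) \<le> C * ell2_norm f"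
  and "in_ell2 f" "ell2_norm f \<le> 1"
  shows "ell2_norm (A f) \<le> op_norm A"
  unfolding op_norm_def
proof (rule cSUP_upper)
  show "f \<in> {f. in_ell2 f \<and> ell2_norm f \<le> 1}" using assms by simp
  have "\<And>g. in_ell2 g \<Longrightarrow> ell2_norm g \<le> 1 \<Longrightarrow> ell2_norm (A g) \<le> max C 0"
  proof -
    fix g :: "'a \<Rightarrow> complex" assume g: "in_ell2 g" "ell2_norm g \<le> 1"
    have "ell2_norm (A g) \<le> C * ell2_norm g" using assms g by blast
    also have "\<dots> \<le> max C 0 * ell2_norm g" by (simp add: ell2_norm_nonneg mult_right_mono)
    also have "\<dots> \<le> max C 0 * 1" using g by (intro mult_left_mono) auto
    finally show "ell2_norm (A g) \<le> max C 0" by simp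
  qed
  thus "bdd_above ((\<lambda>f. ell2_norm (A f)) ` {f. in_ell2 f \<and> ell2_norm f \<le> 1})"
    by (intro bdd_aboveI[of _ "max C 0"]) auto
qed

lemma diff_bound: assumes "bounded_op a" "bounded_op b"
  obtains C where "\<And>f. in_ell2 f \<Longrightarrow> in_ell2 (op_diff a b f) \<and> ell2_norm (op_diff a b f) \<le> C * ell2_norm f"
proof -
  obtain C1 where C1: "C1 \<ge> 0" "\<And>f. in_ell2 f \<Longrightarrow> ell2_norm (a f) \<le> C1 * ell2_norm f"
    using bop_bound[OF assms(1)] by blast
  obtain C2 where C2: "C2 \<ge> 0" "\<And>f. in_ell2 f \<Longrightarrow> ell2_norm (b f) \<le> C2 * ell2_norm f"
    using bop_bound[OF assms(2)] by blast
  have "in_ell2 (op_diff a b f) \<and> ell2_norm (op_diff a b f) \<le> (C1 + C2) * ell2_norm f" if f: "in_ell2 f" for f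
  proof -
    have "in_ell2 (op_diff a b f) \<and> ell2_norm (op_diff a b f) \<le> ell2_norm (a f) + ell2_norm (b f)"
      by (rule ell2_tri[OF bop_ell2[OF assms(1) f] bop_ell2[OF assms(2) f]])
        (simp add: op_diff_def norm_triangle_ineq4)
    thus ?thesis using C1(2)[OF f] C2(2)[OF f] by (simp add: distrib_right)
  qed
  thus ?thesis using that by blast
qed

lemma sigma_apply: "sigma h t a f x = exp (\<i> * complex_of_real (t * h x)) * a (exp_diag h (- t) f) x"
  by (simp add: sigma_def exp_diag_def)

lemma sigma_diff_apply: "op_diff (sigma h t a) (sigma h t b) f x
   = exp (\<i> * complex_of_real (t * h x)) * op_diff a b (exp_diag h (- t) f) x"
  by (simp add: sigma_apply op_diff_def algebra_simps)

lemma sigma_diff_norm: "in_ell2 (op_diff a b (exp_diag h (- t) f)) \<Longrightarrow>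
  ell2_norm (op_diff (sigma h t a) (sigma h t b) f) = ell2_norm (op_diff a b (exp_diag h (- t) f))"
  using ell2_eq_norm[of "op_diff a b (exp_diag h (- t) f)" "op_diff (sigma h t a) (sigma h t b) f"]
  by (simp add: sigma_diff_apply norm_mult)

lemma exp_diag_lin: "exp_diag h t (\<lambda>x. f x + c * g x) = (\<lambda>x. exp_diag h t f x + c * exp_diag h t g x)"
  by (simp add: exp_diag_def algebra_simps)

lemma sigma_bounded: assumes "bounded_op a" shows "bounded_op (sigma h t a)"
proof -
  obtain C where C: "C \<ge> 0" "\<And>f. in_ell2 f \<Longrightarrow> ell2_norm (a f) \<le> C * ell2_norm f"
    using bop_bound[OF assms] by blast
  have "in_ell2 (sigma h t a f) \<and> ell2_norm (sigma h t a f) \<le> C * ell2_norm f" if f: "in_ell2 f" for f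
  proof -
    have e: "in_ell2 (exp_diag h (-t) f)" "ell2_norm (exp_diag h (-t) f) = ell2_norm f"
      using exp_diag_ell2[OF f] by auto
    have "sigma h t a f = exp_diag h t (a (exp_diag h (-t) f))" by (simp add: sigma_def)
    thus ?thesis using exp_diag_ell2[OF bop_ell2[OF assms e(1)], of h t] C(2)[OF e(1)] e(2) by simp
  qed
  moreover have "sigma h t a (\<lambda>x. f x + c * g x) = (\<lambda>x. sigma h t a f x + c * sigma h t a g x)"
    if "in_ell2 f" "in_ell2 g" for f g c
    using bop_lin[OF assms exp_diag_ell2[OF that(1), THEN conjunct1] exp_diag_ell2[OF that(2), THEN conjunct1]]
    by (simp add: sigma_def exp_diag_lin)
  ultimately show ?thesis unfolding bounded_op_def by blast
qed

lemma exp_diag_delta: "exp_diag h t (delta y) = (\<lambda>z. exp (\<i> * complex_of_real (t * h y)) * delta y z)"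
  by (auto simp: exp_diag_def delta_def)

lemma sigma_fp: assumes "bounded_op b" "finite_propagation b" shows "finite_propagation (sigma h t b)"
proof -
  obtain R where R: "\<And>x y. b (delta y) x \<noteq> 0 \<Longrightarrow> dist x y \<le> R"
    using assms(2) unfolding finite_propagation_def by blast
  have "sigma h t b (delta y) x = exp (\<i> * complex_of_real (t * h x)) *
      (exp (\<i> * complex_of_real (- t * h y)) * b (delta y) x)" for x y
    unfolding sigma_apply exp_diag_delta bop_scale[OF assms(1) delta_norm[THEN conjunct1]] ..
  thus ?thesis unfolding finite_propagation_def using R by (intro exI[of _ R]) auto
qed

lemma sigma_roe: assumes "a \<in> uniform_roe" shows "sigma h t a \<in> uniform_roe"
proof -
  have a: "bounded_op a" using assms by (simp add: uniform_roe_def)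
  have "\<exists>b. bounded_op b \<and> finite_propagation b \<and> op_norm (op_diff (sigma h t a) b) < \<epsilon>"
    if e: "\<epsilon> > 0" for \<epsilon>
  proof -
    obtain b where b: "bounded_op b" "finite_propagation b" "op_norm (op_diff a b) < \<epsilon>"
      using assms e unfolding uniform_roe_def by blast
    obtain C where C: "\<And>f. in_ell2 f \<Longrightarrow> in_ell2 (op_diff a b f) \<and> ell2_norm (op_diff a b f) \<le> C * ell2_norm f"
      using diff_bound[OF a b(1)] by blast
    have "op_norm (op_diff (sigma h t a) (sigma h t b)) \<le> op_norm (op_diff a b)"
    proof (rule opnorm_le)
      fix f :: "'a \<Rightarrow> complex" assume f: "in_ell2 f" "ell2_norm f \<le> 1"
      have e: "in_ell2 (exp_diag h (-t) f)" "ell2_norm (exp_diag h (-t) f) = ell2_norm f"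
        using exp_diag_ell2[OF f(1)] by auto
      have "ell2_norm (op_diff (sigma h t a) (sigma h t b) f) = ell2_norm (op_diff a b (exp_diag h (- t) f))"
        using C[OF e(1)] by (intro sigma_diff_norm) auto
      also have "\<dots> \<le> op_norm (op_diff a b)"
        using C e f by (intro opnorm_ge[of _ C]) auto
      finally show "ell2_norm (op_diff (sigma h t a) (sigma h t b) f) \<le> op_norm (op_diff a b)" .
    qed
    thus ?thesis using b sigma_bounded[OF b(1)] sigma_fp[OF b(1,2)]
      by (intro exI[of _ "sigma h t b"]) auto
  qed
  thus ?thesis using sigma_bounded[OF a] unfolding uniform_roe_def by blast
qed



lemma cs_sum: assumes "finite A" "\<And>y. y \<in> A \<Longrightarrow> a y \<ge> 0"
  shows "(\<Sum>y\<in>A. a y)\<^sup>2 \<le> real (card A) * (\<Sum>y\<in>A. (a y)\<^sup>2)"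
proof -
  have "(\<Sum>y\<in>A. a y) = (\<Sum>y\<in>A. \<bar>a y\<bar> * \<bar>1\<bar>)" using assms by (intro sum.cong) auto
  also have "\<dots> \<le> L2_set a A * L2_set (\<lambda>_. 1) A" by (rule L2_set_mult_ineq)
  finally have *: "(\<Sum>y\<in>A. a y) \<le> L2_set a A * sqrt (real (card A))" by (simp add: L2_set_constant)
  have "0 \<le> (\<Sum>y\<in>A. a y)" using assms by (simp add: sum_nonneg)
  hence "(\<Sum>y\<in>A. a y)\<^sup>2 \<le> (L2_set a A * sqrt (real (card A)))\<^sup>2"
    using * by (simp add: power_mono)
  also have "\<dots> = (\<Sum>y\<in>A. (a y)\<^sup>2) * real (card A)"
    by (simp add: power_mult_distrib L2_set_def sum_nonneg)
  finally show ?thesis by (simp add: mult.commute)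
qed

lemma schur:
  assumes f: "in_ell2 f"
    and B: "\<And>x. finite (B x)" "\<And>x. card (B x) \<le> N"
    and Bsym: "\<And>x y. y \<in> B x \<longleftrightarrow> x \<in> B y"
    and m: "\<And>x y. y \<in> B x \<Longrightarrow> cmod (m x y) \<le> M" and M: "M \<ge> 0"
  shows "in_ell2 (\<lambda>x. \<Sum>y\<in>B x. m x y * f y) \<and>
         ell2_norm (\<lambda>x. \<Sum>y\<in>B x. m x y * f y) \<le> M * real N * ell2_norm f"
proof (rule ell2_by_finite)
  show "0 \<le> M * real N * ell2_norm f" using M by (simp add: ell2_norm_nonneg)
  fix G :: "'a set" assume G: "finite G"
  let ?F = "\<lambda>y. (cmod (f y))\<^sup>2"
  have pt: "(cmod (\<Sum>y\<in>B x. m x y * f y))\<^sup>2 \<le> M\<^sup>2 * real N * (\<Sum>y\<in>B x. ?F y)" for x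
  proof -
    have "cmod (\<Sum>y\<in>B x. m x y * f y) \<le> (\<Sum>y\<in>B x. cmod (m x y * f y))" by (rule norm_sum)
    also have "\<dots> \<le> (\<Sum>y\<in>B x. M * cmod (f y))"
      using m by (intro sum_mono) (simp add: norm_mult mult_right_mono)
    finally have a: "cmod (\<Sum>y\<in>B x. m x y * f y) \<le> M * (\<Sum>y\<in>B x. cmod (f y))"
      by (simp add: sum_distrib_left)
    have "(cmod (\<Sum>y\<in>B x. m x y * f y))\<^sup>2 \<le> (M * (\<Sum>y\<in>B x. cmod (f y)))\<^sup>2"
      using a by (simp add: power_mono)
    also have "\<dots> = M\<^sup>2 * (\<Sum>y\<in>B x. cmod (f y))\<^sup>2" by (simp add: power_mult_distrib)
    also have "\<dots> \<le> M\<^sup>2 * (real (card (B x)) * (\<Sum>y\<in>B x. ?F y))"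
      by (intro mult_left_mono cs_sum B) auto
    also have "\<dots> \<le> M\<^sup>2 * (real N * (\<Sum>y\<in>B x. ?F y))"
      using B(2)[of x] by (intro mult_left_mono mult_right_mono) (auto simp: sum_nonneg)
    finally show ?thesis by simp
  qed
  define U where "U = (\<Union>x\<in>G. B x)"
  have U: "finite U" using G B unfolding U_def by auto
  have "(\<Sum>x\<in>G. \<Sum>y\<in>B x. ?F y) = (\<Sum>x\<in>G. \<Sum>y\<in>{y. y \<in> U \<and> y \<in> B x}. ?F y)"
    unfolding U_def by (intro sum.cong) auto
  also have "\<dots> = (\<Sum>y\<in>U. \<Sum>x\<in>{x. x \<in> G \<and> y \<in> B x}. ?F y)"
    by (rule sum.swap_restrict[OF G U])
  also have "\<dots> \<le> (\<Sum>y\<in>U. real N * ?F y)"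
  proof (intro sum_mono)
    fix y assume "y \<in> U"
    have "card {x. x \<in> G \<and> y \<in> B x} \<le> card (B y)"
      using B(1)[of y] Bsym by (intro card_mono) auto
    hence "card {x. x \<in> G \<and> y \<in> B x} \<le> N" using B(2)[of y] by linarith
    thus "(\<Sum>x\<in>{x. x \<in> G \<and> y \<in> B x}. ?F y) \<le> real N * ?F y"
      by (simp add: mult_right_mono)
  qed
  also have "\<dots> \<le> real N * (ell2_norm f)\<^sup>2"
    by (simp add: sum_distrib_left[symmetric] mult_left_mono sum_le_ell2[OF f U])
  finally have S: "(\<Sum>x\<in>G. \<Sum>y\<in>B x. ?F y) \<le> real N * (ell2_norm f)\<^sup>2" .
  have "(\<Sum>x\<in>G. (cmod (\<Sum>y\<in>B x. m x y * f y))\<^sup>2) \<le> (\<Sum>x\<in>G. M\<^sup>2 * real N * (\<Sum>y\<in>B x. ?F y))"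
    by (intro sum_mono pt)
  also have "\<dots> = M\<^sup>2 * real N * (\<Sum>x\<in>G. \<Sum>y\<in>B x. ?F y)" by (simp add: sum_distrib_left)
  also have "\<dots> \<le> M\<^sup>2 * real N * (real N * (ell2_norm f)\<^sup>2)"
    using S by (intro mult_left_mono) auto
  also have "\<dots> = (M * real N * ell2_norm f)\<^sup>2" by (simp add: power2_eq_square)
  finally show "(\<Sum>x\<in>G. (cmod (\<Sum>y\<in>B x. m x y * f y))\<^sup>2) \<le> (M * real N * ell2_norm f)\<^sup>2" .
qed



lemma sum_delta_apply: "(\<Sum>y\<in>F. f y * delta y z) = (if z \<in> F then f z else 0)" if "finite F"
  using that by (simp add: delta_def if_distrib sum.delta cong: if_cong)

lemma bop_finsum: assumes b: "bounded_op b" and F: "finite F"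
  shows "b (\<lambda>z. \<Sum>y\<in>F. f y * delta y z) = (\<lambda>x. \<Sum>y\<in>F. f y * b (delta y) x)"
  using F
proof (induction F rule: finite_induct)
  case empty
  then show ?case using bop_zero[OF b] by simp
next
  case (insert y F)
  have S: "in_ell2 (\<lambda>z. \<Sum>y\<in>F. f y * delta y z)"
    by (rule fin_supp_ell2[of F]) (use insert in \<open>auto simp: sum_delta_apply\<close>)
  have eq: "(\<lambda>z. \<Sum>y\<in>insert y F. f y * delta y z) = (\<lambda>z. (\<Sum>y\<in>F. f y * delta y z) + f y * delta y z)"
    using insert by (simp add: add.commute)
  have "b (\<lambda>z. (\<Sum>y\<in>F. f y * delta y z) + f y * delta y z) = (\<lambda>x. b (\<lambda>z. \<Sum>y\<in>F. f y * delta y z) x + f y * b (delta y) x)"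
    by (rule bop_lin[OF b S delta_norm[THEN conjunct1]])
  thus ?case using insert eq by (simp add: add.commute)
qed

lemma bop_rep:
  assumes b: "bounded_op b" and R: "\<And>x y. b (delta y) x \<noteq> 0 \<Longrightarrow> dist x y \<le> R"
    and r: "R < r" and fin: "finite (ball x r)" and f: "in_ell2 f"
  shows "b f x = (\<Sum>y\<in>ball x r. f y * b (delta y) x)"
proof -
  obtain C where C: "C \<ge> 0" "\<And>f. in_ell2 f \<Longrightarrow> ell2_norm (b f) \<le> C * ell2_norm f"
    using bop_bound[OF b] by blast
  let ?S = "\<Sum>y\<in>ball x r. f y * b (delta y) x"
  let ?g = "\<lambda>y. (cmod (f y))\<^sup>2"
  have key: "cmod (b f x - ?S) \<le> C * e" if e: "e > 0" for e
  proof -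
    have hs: "(?g has_sum (\<Sum>\<^sub>\<infinity>y. ?g y)) UNIV" using f unfolding in_ell2_def by simp
    hence "(sum ?g \<longlongrightarrow> (\<Sum>\<^sub>\<infinity>y. ?g y)) (finite_subsets_at_top UNIV)" by (simp add: has_sum_def)
    hence "\<forall>\<^sub>F F in finite_subsets_at_top UNIV. dist (sum ?g F) (\<Sum>\<^sub>\<infinity>y. ?g y) < e\<^sup>2"
      using e by (intro tendstoD) auto
    hence "\<exists>X. finite X \<and> (\<forall>Y. finite Y \<and> X \<subseteq> Y \<longrightarrow> dist (sum ?g Y) (\<Sum>\<^sub>\<infinity>y. ?g y) < e\<^sup>2)"
      unfolding eventually_finite_subsets_at_top by simp
    then obtain X where X: "finite X" "\<And>Y. finite Y \<Longrightarrow> X \<subseteq> Y \<Longrightarrow> dist (sum ?g Y) (\<Sum>\<^sub>\<infinity>y. ?g y) < e\<^sup>2"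
      by auto
    define F where "F = X \<union> ball x r"
    have F: "finite F" "X \<subseteq> F" "ball x r \<subseteq> F" using X fin by (auto simp: F_def)
    have close: "(\<Sum>\<^sub>\<infinity>y. ?g y) - sum ?g F < e\<^sup>2" using X(2)[OF F(1,2)] by (simp add: dist_real_def)
    define k where "k = (\<lambda>z. if z \<in> F then 0 else f z)"
    have k: "in_ell2 k \<and> ell2_norm k \<le> e"
    proof (rule ell2_by_finite)
      fix G :: "'a set" assume G: "finite G"
      have "(\<Sum>z\<in>G. (cmod (k z))\<^sup>2) = (\<Sum>z\<in>G - F. ?g z)"
        using G by (intro sum.mono_neutral_cong_right) (auto simp: k_def)
      also have "\<dots> = sum ?g (G \<union> F) - sum ?g F"
      proof -
        have "sum ?g ((G - F) \<union> F) = sum ?g (G - F) + sum ?g F"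
          using G F(1) by (intro sum.union_disjoint) auto
        hence "sum ?g (G \<union> F) = sum ?g (G - F) + sum ?g F"
          by (simp add: Un_Diff_cancel2)
        thus ?thesis by simp
      qed
      also have "sum ?g (G \<union> F) \<le> (\<Sum>\<^sub>\<infinity>y. ?g y)"
        using f G F(1) unfolding in_ell2_def by (intro finite_sum_le_infsum) auto
      finally show "(\<Sum>z\<in>G. (cmod (k z))\<^sup>2) \<le> e\<^sup>2" using close by simp
    qed (use e in simp)
    define p where "p = (\<lambda>z. if z \<in> F then f z else 0)"
    have p: "in_ell2 p" by (rule fin_supp_ell2[OF F(1)]) (auto simp: p_def)
    have "f = (\<lambda>z. p z + 1 * k z)" by (auto simp: p_def k_def)
    hence "b f = b (\<lambda>z. p z + 1 * k z)" by (rule arg_cong[where f=b])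
    also have "\<dots> = (\<lambda>z. b p z + 1 * b k z)" by (rule bop_lin[OF b p k[THEN conjunct1]])
    finally have bf: "b f = (\<lambda>z. b p z + 1 * b k z)" .
    have "p = (\<lambda>z. \<Sum>y\<in>F. f y * delta y z)" using F(1) by (simp add: p_def sum_delta_apply)
    hence "b p x = (\<Sum>y\<in>F. f y * b (delta y) x)" using bop_finsum[OF b F(1), of f] by simp
    also have "\<dots> = ?S"
    proof (rule sum.mono_neutral_right[OF F(1) F(3)])
      show "\<forall>y\<in>F - ball x r. f y * b (delta y) x = 0"
      proof
        fix y assume "y \<in> F - ball x r"
        hence "\<not> dist x y < r" by (simp add: mem_ball)
        hence "b (delta y) x = 0" using R[of y x] r by fastforce
        thus "f y * b (delta y) x = 0" by simp
      qed
    qed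
    finally have "b f x - ?S = b k x" using bf by simp
    hence "cmod (b f x - ?S) \<le> ell2_norm (b k)" using pt_le_ell2[OF bop_ell2[OF b k[THEN conjunct1]]] by simp
    also have "\<dots> \<le> C * ell2_norm k" using C(2) k by blast
    also have "\<dots> \<le> C * e" using k C(1) by (intro mult_left_mono) auto
    finally show ?thesis .
  qed
  have "cmod (b f x - ?S) = 0"
  proof (rule ccontr)
    assume ne: "cmod (b f x - ?S) \<noteq> 0"
    hence pos: "cmod (b f x - ?S) > 0" by simp
    define e where "e = cmod (b f x - ?S) / (C + 1)"
    have e: "e > 0" using pos C(1) by (simp add: e_def)
    have "C * e < (C + 1) * e" using e by simp
    also have "\<dots> = cmod (b f x - ?S)" using C(1) by (simp add: e_def)
    finally show False using key[OF e] by simp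
  qed
  thus ?thesis by simp
qed



lemma sigma_diff_bound: assumes a: "bounded_op a" and b: "bounded_op b" and f: "in_ell2 f" "ell2_norm f \<le> 1"
  shows "in_ell2 (op_diff (sigma h t a) (sigma h t b) f) \<and>
         ell2_norm (op_diff (sigma h t a) (sigma h t b) f) \<le> op_norm (op_diff a b)"
proof -
  obtain C where C: "\<And>f. in_ell2 f \<Longrightarrow> in_ell2 (op_diff a b f) \<and> ell2_norm (op_diff a b f) \<le> C * ell2_norm f"
    using diff_bound[OF a b] by blast
  have e: "in_ell2 (exp_diag h (-t) f)" "ell2_norm (exp_diag h (-t) f) = ell2_norm f"
    using exp_diag_ell2[OF f(1)] by auto
  have pw: "\<And>x. cmod (op_diff (sigma h t a) (sigma h t b) f x) = cmod (op_diff a b (exp_diag h (- t) f) x)"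
    by (simp add: sigma_diff_apply norm_mult)
  have eq: "in_ell2 (op_diff (sigma h t a) (sigma h t b) f) \<and>
     ell2_norm (op_diff (sigma h t a) (sigma h t b) f) = ell2_norm (op_diff a b (exp_diag h (- t) f))"
    by (rule ell2_eq_norm[OF C[OF e(1), THEN conjunct1] pw])
  have C': "\<And>g. in_ell2 g \<Longrightarrow> ell2_norm (op_diff a b g) \<le> C * ell2_norm g"
    using C by blast
  have "ell2_norm (op_diff a b (exp_diag h (- t) f)) \<le> op_norm (op_diff a b)"
  proof -
    have n1: "ell2_norm (exp_diag h (-t) f) \<le> 1" using e(2) f(2) by linarith
    show ?thesis by (rule opnorm_ge[where C=C, OF C' e(1) n1])
  qed
  thus ?thesis using eq by simp
qed

lemma entry_bound: assumes b: "bounded_op b" "C \<ge> 0" "\<And>f. in_ell2 f \<Longrightarrow> ell2_norm (b f) \<le> C * ell2_norm f"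
  shows "cmod (b (delta y) x) \<le> C"
proof -
  have "cmod (b (delta y) x) \<le> ell2_norm (b (delta y))"
    by (rule pt_le_ell2[OF bop_ell2[OF b(1) delta_norm[THEN conjunct1]]])
  also have "\<dots> \<le> C * ell2_norm (delta y)" by (rule b(3)[OF delta_norm[THEN conjunct1]])
  also have "\<dots> \<le> C * 1" using delta_norm[of y] b(2) by (intro mult_left_mono) auto
  finally show ?thesis by simp
qed

theorem proposition2p1:
  fixes h :: "'a::metric_space \<Rightarrow> real"
  assumes "ulf TYPE('a)"
    and "coarse_fun h"
    and "a \<in> uniform_roe"
  shows "(\<forall>t. sigma h t a \<in> uniform_roe) \<and>
         (\<forall>t0. \<forall>\<epsilon>>0. \<exists>\<delta>>0. \<forall>t. \<bar>t - t0\<bar> < \<delta> \<longrightarrow>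
             op_norm (op_diff (sigma h t a) (sigma h t0 a)) < \<epsilon>)"
proof (intro conjI allI impI)
  show "sigma h t a \<in> uniform_roe" for t using sigma_roe[OF assms(3)] .
  fix t0 :: real and \<epsilon> :: real assume \<epsilon>: "\<epsilon> > 0"
  have a: "bounded_op a" using assms(3) by (simp add: uniform_roe_def)
  obtain b where b: "bounded_op b" "finite_propagation b" "op_norm (op_diff a b) < \<epsilon> / 3"
  proof -
    have "\<epsilon> / 3 > 0" using \<epsilon> by simp
    thus ?thesis using assms(3) that unfolding uniform_roe_def by blast
  qed
  obtain R where R: "\<And>x y. b (delta y) x \<noteq> 0 \<Longrightarrow> dist x y \<le> R"
    using b(2) unfolding finite_propagation_def by blast
  define r where "r = \<bar>R\<bar> + 1"
  have r: "r > 0" "R < r" by (auto simp: r_def)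
  obtain N :: nat where N: "\<And>x::'a. finite (ball x r) \<and> card (ball x r) \<le> N"
    using assms(1) r unfolding ulf_def by blast
  obtain s where s: "s > 0" "\<And>x y. dist x y < r \<Longrightarrow> \<bar>h x - h y\<bar> < s"
    using assms(2) r unfolding coarse_fun_def by blast
  obtain Cb where Cb: "Cb \<ge> 0" "\<And>f. in_ell2 f \<Longrightarrow> ell2_norm (b f) \<le> Cb * ell2_norm f"
    using bop_bound[OF b(1)] by blast
  define X where "X = s * Cb * real N"
  have X: "X \<ge> 0" using s Cb by (simp add: X_def)
  define \<delta> where "\<delta> = \<epsilon> / (3 * (X + 1))"
  have \<delta>: "\<delta> > 0" using \<epsilon> X by (simp add: \<delta>_def)
  have \<delta>X: "\<delta> * X < \<epsilon> / 3"
  proof -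
    have "\<delta> * X = (\<epsilon> / 3) * (X / (X + 1))" using X by (simp add: \<delta>_def field_simps)
    also have "\<dots> < (\<epsilon> / 3) * 1" using X \<epsilon> by (intro mult_strict_left_mono) auto
    finally show ?thesis by simp
  qed
  show "\<exists>\<delta>>0. \<forall>t. \<bar>t - t0\<bar> < \<delta> \<longrightarrow> op_norm (op_diff (sigma h t a) (sigma h t0 a)) < \<epsilon>"
  proof (intro exI[of _ \<delta>] conjI allI impI)
    show "\<delta> > 0" by (rule \<delta>)
    fix t assume t: "\<bar>t - t0\<bar> < \<delta>"
    define M where "M = \<bar>t - t0\<bar> * s * Cb"
    have M: "M \<ge> 0" using s Cb by (simp add: M_def)
    have MN: "M * real N \<le> \<delta> * X"
    proof -
      have "M * real N = \<bar>t - t0\<bar> * X" by (simp add: M_def X_def mult.assoc)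
      also have "\<dots> \<le> \<delta> * X" using t X by (intro mult_right_mono) auto
      finally show ?thesis .
    qed
    have "op_norm (op_diff (sigma h t a) (sigma h t0 a)) \<le> op_norm (op_diff a b) + M * real N + op_norm (op_diff a b)"
    proof (rule opnorm_le)
      fix f :: "'a \<Rightarrow> complex" assume f: "in_ell2 f" "ell2_norm f \<le> 1"
      define g1 where "g1 = op_diff (sigma h t a) (sigma h t b) f"
      define g2 where "g2 = op_diff (sigma h t b) (sigma h t0 b) f"
      define g3 where "g3 = op_diff (sigma h t0 a) (sigma h t0 b) f"
      have g1: "in_ell2 g1 \<and> ell2_norm g1 \<le> op_norm (op_diff a b)"
        unfolding g1_def by (rule sigma_diff_bound[OF a b(1) f])
      have g3: "in_ell2 g3 \<and> ell2_norm g3 \<le> op_norm (op_diff a b)"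
        unfolding g3_def by (rule sigma_diff_bound[OF a b(1) f])
      define m where "m = (\<lambda>x y. (exp (\<i> * complex_of_real (t * h x)) * exp (\<i> * complex_of_real (- t * h y))
          - exp (\<i> * complex_of_real (t0 * h x)) * exp (\<i> * complex_of_real (- t0 * h y))) * b (delta y) x)"
      have rep: "sigma h \<tau> b f x = (\<Sum>y\<in>ball x r. exp (\<i> * complex_of_real (\<tau> * h x)) *
           exp (\<i> * complex_of_real (- \<tau> * h y)) * b (delta y) x * f y)" for \<tau> x
      proof -
        have "sigma h \<tau> b f x = exp (\<i> * complex_of_real (\<tau> * h x)) *
            (\<Sum>y\<in>ball x r. exp_diag h (-\<tau>) f y * b (delta y) x)"
          unfolding sigma_apply
          using bop_rep[OF b(1) R r(2) N[THEN conjunct1] exp_diag_ell2[OF f(1), THEN conjunct1]] by simp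
        thus ?thesis by (simp add: sum_distrib_left exp_diag_def algebra_simps)
      qed
      have g2eq: "g2 = (\<lambda>x. \<Sum>y\<in>ball x r. m x y * f y)"
      proof
        fix x
        show "g2 x = (\<Sum>y\<in>ball x r. m x y * f y)"
          unfolding g2_def op_diff_def rep m_def
          by (simp add: sum_subtractf[symmetric] algebra_simps)
      qed
      have mb: "cmod (m x y) \<le> M" if y: "y \<in> ball x r" for x y
      proof -
        have hd: "\<bar>h x - h y\<bar> \<le> s" using s(2)[of x y] y by (simp add: mem_ball less_imp_le)
        have "exp (\<i> * complex_of_real (t * h x)) * exp (\<i> * complex_of_real (- t * h y))
              = exp (\<i> * complex_of_real (t * (h x - h y)))"
          by (simp add: algebra_simps flip: exp_add)
        moreover have "exp (\<i> * complex_of_real (t0 * h x)) * exp (\<i> * complex_of_real (- t0 * h y))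
              = exp (\<i> * complex_of_real (t0 * (h x - h y)))"
          by (simp add: algebra_simps flip: exp_add)
        ultimately have "cmod (m x y) = cmod (exp (\<i> * complex_of_real (t * (h x - h y)))
              - exp (\<i> * complex_of_real (t0 * (h x - h y)))) * cmod (b (delta y) x)"
          by (simp add: m_def norm_mult)
        also have "\<dots> \<le> \<bar>t * (h x - h y) - t0 * (h x - h y)\<bar> * Cb"
          by (intro mult_mono cexp_diff_le entry_bound[OF b(1) Cb]) auto
        also have "\<bar>t * (h x - h y) - t0 * (h x - h y)\<bar> = \<bar>t - t0\<bar> * \<bar>h x - h y\<bar>"
          by (simp add: abs_mult[symmetric] algebra_simps)
        also have "\<dots> * Cb \<le> \<bar>t - t0\<bar> * s * Cb"
          using hd Cb by (intro mult_right_mono mult_left_mono) auto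
        finally show ?thesis by (simp add: M_def)
      qed
      have g2: "in_ell2 g2 \<and> ell2_norm g2 \<le> M * real N * ell2_norm f"
        unfolding g2eq
        by (rule schur[OF f(1)]) (use N mb M in \<open>auto simp: mem_ball dist_commute\<close>)
      have g2': "ell2_norm g2 \<le> M * real N"
      proof -
        have "M * real N * ell2_norm f \<le> M * real N * 1" using f M by (intro mult_left_mono) auto
        thus ?thesis using g2 by simp
      qed
      have s12: "in_ell2 (\<lambda>x. g1 x + g2 x) \<and> ell2_norm (\<lambda>x. g1 x + g2 x) \<le> ell2_norm g1 + ell2_norm g2"
        using g1 g2 by (intro ell2_tri) (auto simp: norm_triangle_ineq)
      have "in_ell2 (op_diff (sigma h t a) (sigma h t0 a) f) \<and>
          ell2_norm (op_diff (sigma h t a) (sigma h t0 a) f) \<le> ell2_norm (\<lambda>x. g1 x + g2 x) + ell2_norm g3"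
      proof (rule ell2_tri)
        show "in_ell2 (\<lambda>x. g1 x + g2 x)" using s12 by simp
        show "in_ell2 g3" using g3 by simp
        fix x
        have "op_diff (sigma h t a) (sigma h t0 a) f x = (g1 x + g2 x) - g3 x"
          by (simp add: g1_def g2_def g3_def op_diff_def)
        thus "cmod (op_diff (sigma h t a) (sigma h t0 a) f x) \<le> cmod (g1 x + g2 x) + cmod (g3 x)"
          by (simp add: norm_triangle_ineq4)
      qed
      thus "ell2_norm (op_diff (sigma h t a) (sigma h t0 a) f)
          \<le> op_norm (op_diff a b) + M * real N + op_norm (op_diff a b)"
        using s12 g1 g2' g3 by linarith
    qed
    also have "\<dots> < \<epsilon> / 3 + \<epsilon> / 3 + \<epsilon> / 3" using b(3) MN \<delta>X by linarith
    finally show "op_norm (op_diff (sigma h t a) (sigma h t0 a)) < \<epsilon>" by simp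
  qed
qed


end
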